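(* Let $F_t$, $t\in[0,1]$, be a one-parameter family on a complete metric space $(\mathbb X,d)$ satisfying (H1) and (H2), and suppose $f_{(i_*,1)}$ is an isometry for some $i_*\in\{1,\dots,N\}$. (a) If an upper transition attractor $A^\bullet$ exists, then $f_{(i_*,1)}(A^\bullet)=A^\bullet$. (b) If moreover (H3) holds and the lower transition attractor $A_\bullet$ exists and is compact, then $f_{(i_*,1)}(A_\bullet)=A_\bullet$.
   Context: Let $(\mathbb X,d)$ be a complete metric space. A one-parameter family is $F_t=\{f_{(1,t)},\dots,f_{(N,t)}\}$, $t\in[0,1]$, $N\ge2$, of continuous self-maps of $\mathbb X$. $\mathrm{Lip}(f,d)=\sup_{x\ne y}d(f(x),f(y))/d(x,y)$ and $\mathrm{Lip}(F_t,d)=\max_i\mathrm{Lip}(f_{(i,t)},d)$. Conditions: (H1) for every $x\in\mathbb X$ and every $i$, the map $t\mapsto f_{(i,t)}(x)$ is continuous on $[0,1]$; (H2) $\mathrm{Lip}(F_t,d)<1$ for all $t\in[0,1)$; (H3) for each $i$ the limit $q_i=\lim_{t\to1^-}q_{i,t}$ exists, where $q_{i,t}$ is the unique fixed point of $f_{(i,t)}$ for $t\in[0,1)$; $Q=\{q_1,\dots,q_N\}$. For an IFS $F$ and $S\subseteq\mathbb X$, $F(S)=\overline{\bigcup_{f\in F}f(S)}$. For $t\in[0,1)$, $A_t$ is the attractor of $F_t$, the unique nonempty compact set with $F_t(A_t)=A_t$. With $h$ the Hausdorff metric, an upper transition attractor is a compact set $A^\bullet$ for which there is an increasing sequence $t_n\in[0,1)$,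 $t_n\to1$, with $h(A_{t_n},A^\bullet)\to0$. The lower transition attractor is the smallest (w.r.t. inclusion) set $A_\bullet$ with $F_1(A_\bullet)=A_\bullet$ and $Q\subseteq A_\bullet$. *)

theory Defs
  imports "HOL-Analysis.Analysis"
begin

text \<open>A one-parameter family is given by f :: nat => real => 'a => 'a,
  where f i t is the map f_(i,t), for i in {1..N} and t in [0,1].\<close>

definition Lip :: "('a::metric_space \<Rightarrow> 'a) \<Rightarrow> ereal" where
  "Lip g = (SUP p \<in> {(x,y). x \<noteq> y}. ereal (dist (g (fst p)) (g (snd p)) / dist (fst p) (snd p)))"

definition LipF :: "(nat \<Rightarrow> real \<Rightarrow> 'a::metric_space \<Rightarrow> 'a) \<Rightarrow> nat \<Rightarrow> real \<Rightarrow> ereal" where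
  "LipF f N t = Max ((\<lambda>i. Lip (f i t)) ` {1..N})"

definition hutch :: "(nat \<Rightarrow> real \<Rightarrow> 'a::metric_space \<Rightarrow> 'a) \<Rightarrow> nat \<Rightarrow> real \<Rightarrow> 'a set \<Rightarrow> 'a set" where
  "hutch f N t S = closure (\<Union>i\<in>{1..N}. f i t ` S)"

definition attractor :: "(nat \<Rightarrow> real \<Rightarrow> 'a::metric_space \<Rightarrow> 'a) \<Rightarrow> nat \<Rightarrow> real \<Rightarrow> 'a set" where
  "attractor f N t = (THE A. A \<noteq> {} \<and> compact A \<and> hutch f N t A = A)"

definition hausdist :: "'a::metric_space set \<Rightarrow> 'a set \<Rightarrow> real" where
  "hausdist A B = max (SUP a\<in>A. infdist a B) (SUP b\<in>B. infdist b A)"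

definition upper_TA :: "(nat \<Rightarrow> real \<Rightarrow> 'a::metric_space \<Rightarrow> 'a) \<Rightarrow> nat \<Rightarrow> 'a set \<Rightarrow> bool" where
  "upper_TA f N A \<longleftrightarrow> compact A \<and>
     (\<exists>tn::nat \<Rightarrow> real. mono tn \<and> (\<forall>n. 0 \<le> tn n \<and> tn n < 1) \<and> tn \<longlonglongrightarrow> 1 \<and>
        (\<lambda>n. hausdist (attractor f N (tn n)) A) \<longlonglongrightarrow> 0)"

definition fixpt :: "(nat \<Rightarrow> real \<Rightarrow> 'a \<Rightarrow> 'a) \<Rightarrow> nat \<Rightarrow> real \<Rightarrow> 'a" where
  "fixpt f i t = (THE x. f i t x = x)"

definition H1 :: "(nat \<Rightarrow> real \<Rightarrow> 'a::topological_space \<Rightarrow> 'a) \<Rightarrow> nat \<Rightarrow> bool" where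
  "H1 f N \<longleftrightarrow> (\<forall>x. \<forall>i\<in>{1..N}. continuous_on {0..1} (\<lambda>t. f i t x))"

definition H2 :: "(nat \<Rightarrow> real \<Rightarrow> 'a::metric_space \<Rightarrow> 'a) \<Rightarrow> nat \<Rightarrow> bool" where
  "H2 f N \<longleftrightarrow> (\<forall>t\<in>{0..<1}. LipF f N t < 1)"

definition H3 :: "(nat \<Rightarrow> real \<Rightarrow> 'a::topological_space \<Rightarrow> 'a) \<Rightarrow> nat \<Rightarrow> bool" where
  "H3 f N \<longleftrightarrow> (\<forall>i\<in>{1..N}. \<exists>q. ((\<lambda>t. fixpt f i t) \<longlongrightarrow> q) (at_left 1))"

definition Qset :: "(nat \<Rightarrow> real \<Rightarrow> 'a::metric_space \<Rightarrow> 'a) \<Rightarrow> nat \<Rightarrow> 'a set" where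
  "Qset f N = (\<lambda>i. Lim (at_left 1) (fixpt f i)) ` {1..N}"

definition lower_TA :: "(nat \<Rightarrow> real \<Rightarrow> 'a::metric_space \<Rightarrow> 'a) \<Rightarrow> nat \<Rightarrow> 'a set \<Rightarrow> bool" where
  "lower_TA f N A \<longleftrightarrow> hutch f N 1 A = A \<and> Qset f N \<subseteq> A \<and>
     (\<forall>B. hutch f N 1 B = B \<and> Qset f N \<subseteq> B \<longrightarrow> A \<subseteq> B)"

definition isometry :: "('a::metric_space \<Rightarrow> 'a) \<Rightarrow> bool" where
  "isometry g \<longleftrightarrow> (\<forall>x y. dist (g x) (g y) = dist x y)"

end

theory Submission
  imports Defs
begin


lemma isometry_compact_surj:
  fixes g :: "'a::metric_space \<Rightarrow> 'a"
  assumes iso: "isometry g" and K: "compact K" and sub: "g ` K \<subseteq> K"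
  shows "g ` K = K"
proof (rule ccontr)
  assume "g ` K \<noteq> K"
  with sub obtain a where a: "a \<in> K" "a \<notin> g ` K" by blast
  have cg: "continuous_on K g"
    unfolding continuous_on_iff using iso unfolding isometry_def by metis
  have cK: "compact (g ` K)" using compact_continuous_image[OF cg K] .
  have ne: "g ` K \<noteq> {}" using a by blast
  have ep: "infdist a (g ` K) > 0"
    using infdist_pos_not_in_closed[OF compact_imp_closed[OF cK] ne a(2)] .
  define x where "x n = (g ^^ n) a" for n
  have xK: "x n \<in> K" for n
    by (induction n) (use a sub in \<open>auto simp: x_def\<close>)
  have dd: "dist (x (m + k)) (x m) = dist (x k) a" for m k
  proof (induction m)
    case 0 then show ?case by (simp add: x_def)
  next
    case (Suc m)
    have "dist (x (Suc m + k)) (x (Suc m)) = dist (g (x (m+k))) (g (x m))"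
      by (simp add: x_def)
    also have "\<dots> = dist (x (m + k)) (x m)" using iso by (simp add: isometry_def)
    finally show ?case using Suc by simp
  qed
  obtain l r where "l \<in> K" "strict_mono r" and lim: "(x \<circ> r) \<longlonglongrightarrow> l"
    using seq_compactE[OF compact_imp_seq_compact[OF K], of x] xK by blast
  have "Cauchy (x \<circ> r)" using LIMSEQ_imp_Cauchy[OF lim] .
  then obtain M where M: "\<forall>m\<ge>M. \<forall>n\<ge>M. dist ((x \<circ> r) m) ((x \<circ> r) n) < infdist a (g ` K)"
    using ep unfolding Cauchy_def by blast
  have lt: "r M < r (Suc M)" using \<open>strict_mono r\<close> by (simp add: strict_mono_def)
  define k where "k = r (Suc M) - r M"
  have k: "k \<ge> 1" "r (Suc M) = r M + k" using lt by (auto simp: k_def)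
  have "dist (x k) a < infdist a (g ` K)"
    using M[rule_format, of "Suc M" M] dd[of "r M" k] k by simp
  moreover have "x k \<in> g ` K"
  proof -
    obtain j where "k = Suc j" using k(1) by (cases k) auto
    then show ?thesis using xK[of j] by (simp add: x_def)
  qed
  ultimately show False using infdist_le[of "x k" "g ` K" a] by (simp add: dist_commute)
qed

lemma Lip_contr:
  fixes g :: "'a::metric_space \<Rightarrow> 'a"
  assumes "Lip g \<le> ereal c" "0 \<le> c"
  shows "dist (g x) (g y) \<le> c * dist x y"
proof (cases "x = y")
  case True then show ?thesis by simp
next
  case False
  have "ereal (dist (g x) (g y) / dist x y) \<le> Lip g"
    unfolding Lip_def by (rule SUP_upper[where f="\<lambda>p. ereal (dist (g (fst p)) (g (snd p)) / dist (fst p) (snd p))" and i="(x,y)", simplified]) (use False in simp)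
  with assms have "dist (g x) (g y) / dist x y \<le> c" by (metis ereal_less_eq(3) order_trans)
  then show ?thesis using False by (simp add: divide_le_eq mult.commute)
qed



lemma infdist_contr:
  fixes g :: "'a::metric_space \<Rightarrow> 'a"
  assumes "S \<noteq> {}" "\<And>x y. dist (g x) (g y) \<le> c * dist x y" "0 < c"
  shows "infdist (g y) (g ` S) \<le> c * infdist y S"
proof -
  have "infdist (g y) (g ` S) / c \<le> infdist y S"
    unfolding infdist_notempty[OF assms(1)]
  proof (rule cINF_greatest[OF assms(1)])
    fix s assume "s \<in> S"
    then have "infdist (g y) (g ` S) \<le> dist (g y) (g s)" by (intro infdist_le) auto
    also have "\<dots> \<le> c * dist y s" by (rule assms(2))
    finally show "infdist (g y) (g ` S) / c \<le> dist y s"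
      using assms(3) by (simp add: divide_le_eq mult.commute)
  qed
  then show ?thesis using assms(3) by (simp add: divide_le_eq mult.commute)
qed

lemma cancel_lemma:
  fixes r c :: real
  assumes "r \<le> c * r" "0 < c" "c < 1" "0 \<le> r" shows "r = 0"
proof -
  have "(1 - c) * r \<le> 0" using assms(1) by (simp add: algebra_simps)
  then have "r \<le> 0" using assms(3) by (simp add: mult_le_0_iff)
  then show ?thesis using assms(4) by simp
qed

lemma hutch_exists:
  fixes \<phi> :: "nat \<Rightarrow> 'a::complete_space \<Rightarrow> 'a"
  assumes N: "1 \<le> N" and c: "0 < c" "c < 1"
    and L: "\<And>i x y. i \<in> {1..N} \<Longrightarrow> dist (\<phi> i x) (\<phi> i y) \<le> c * dist x y"
    and cont: "\<And>i. i \<in> {1..N} \<Longrightarrow> continuous_on UNIV (\<phi> i)"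
  shows "\<exists>!A. A \<noteq> {} \<and> compact A \<and> closure (\<Union>i\<in>{1..N}. \<phi> i ` A) = A"
proof -
  have i1: "(1::nat) \<in> {1..N}" using N by simp
  obtain x0 where x0: "\<phi> 1 x0 = x0"
    using banach_fix_type[of c "\<phi> 1"] c L[OF i1] by auto
  define G where "G X = (\<Union>i\<in>{1..N}. \<phi> i ` X)" for X
  define S where "S n = (G ^^ n) {x0}" for n
  have S0: "S 0 = {x0}" and SS: "S (Suc n) = G (S n)" for n by (simp_all add: S_def)
  have finS: "finite (S n)" for n
    by (induction n) (auto simp: S0 SS G_def)
  have x0S: "x0 \<in> S n" for n
  proof (induction n)
    case 0 then show ?case by (simp add: S0)
  next
    case (Suc n) then show ?case unfolding SS G_def using i1 x0 by (metis UN_I image_eqI)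
  qed
  define D where "D = (\<Sum>i\<in>{1..N}. dist (\<phi> i x0) x0)"
  have D: "dist (\<phi> i x0) x0 \<le> D" if "i \<in> {1..N}" for i
    unfolding D_def by (rule member_le_sum) (use that in auto)
  have D0: "0 \<le> D" unfolding D_def by (simp add: sum_nonneg)
  have step: "\<forall>y\<in>S (Suc k). \<exists>z\<in>S k. dist y z \<le> c^k * D" for k
  proof (induction k)
    case 0
    show ?case unfolding SS S0 G_def using D by auto
  next
    case (Suc k)
    show ?case
    proof
      fix y assume "y \<in> S (Suc (Suc k))"
      then obtain i y' where i: "i \<in> {1..N}" and y': "y' \<in> S (Suc k)" and y: "y = \<phi> i y'"
        unfolding SS[of "Suc k"] G_def by auto
      obtain z' where z': "z' \<in> S k" "dist y' z' \<le> c^k * D" using Suc y' by blast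
      have "\<phi> i z' \<in> S (Suc k)" unfolding SS G_def using i z' by auto
      moreover have "dist y (\<phi> i z') \<le> c^Suc k * D"
      proof -
        have "dist y (\<phi> i z') \<le> c * dist y' z'" using L[OF i] y by simp
        also have "\<dots> \<le> c * (c^k * D)" using z' c by (intro mult_left_mono) auto
        finally show ?thesis by simp
      qed
      ultimately show "\<exists>z\<in>S (Suc k). dist y z \<le> c ^ Suc k * D" by blast
    qed
  qed
  have far: "\<forall>y\<in>S (n + j). \<exists>z\<in>S n. dist y z \<le> (c^n - c^(n+j)) / (1 - c) * D" for n j
  proof (induction j)
    case 0 then show ?case by auto
  next
    case (Suc j)
    show ?case
    proof
      fix y assume "y \<in> S (n + Suc j)"
      then obtain w where w: "w \<in> S (n + j)" "dist y w \<le> c^(n+j) * D" using step[of "n+j"] by auto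
      obtain z where z: "z \<in> S n" "dist w z \<le> (c^n - c^(n+j)) / (1 - c) * D" using Suc w(1) by blast
      have "dist y z \<le> dist y w + dist w z" by (rule dist_triangle)
      also have "\<dots> \<le> c^(n+j) * D + (c^n - c^(n+j)) / (1 - c) * D" using w z by simp
      also have "\<dots> = (c^n - c^(n + Suc j)) / (1 - c) * D"
        using c by (simp add: field_simps)
      finally show "\<exists>z\<in>S n. dist y z \<le> (c^n - c^(n + Suc j)) / (1 - c) * D" using z by blast
    qed
  qed
  have far2: "\<exists>z\<in>S n. dist y z \<le> c^n / (1 - c) * D" if ym: "y \<in> S m" "n \<le> m" for y n m
  proof -
    obtain j where m: "m = n + j" using ym(2) le_Suc_ex by blast
    obtain z where z: "z \<in> S n" "dist y z \<le> (c^n - c^(n+j)) / (1 - c) * D"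
      using far[of n j] ym(1) m by blast
    have "(c^n - c^(n+j)) / (1 - c) * D \<le> c^n / (1 - c) * D"
      using c D0 by (intro mult_right_mono divide_right_mono) auto
    then show ?thesis using z by force
  qed
  define U where "U = (\<Union>n. S n)"
  define A where "A = closure U"
  have Ane: "A \<noteq> {}" using x0S[of 0] closure_subset unfolding A_def U_def by blast
  have tb: "\<exists>k. finite k \<and> A \<subseteq> (\<Union>x\<in>k. ball x e)" if e: "e > 0" for e
  proof -
    obtain n where n: "c^n < (e/2) * (1 - c) / (D + 1)"
      using real_arch_pow_inv[of "(e/2) * (1 - c) / (D + 1)" c] c e D0 by auto
    have cn: "c^n / (1 - c) * D < e/2"
    proof -
      have "c^n * (D+1) < (e/2) * (1 - c)" using n D0 by (simp add: field_simps)
      moreover have "c^n * D \<le> c^n * (D+1)" using c by (intro mult_left_mono) auto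
      ultimately have "c^n * D < (e/2) * (1 - c)" by linarith
      then show ?thesis using c by (simp add: field_simps)
    qed
    define k where "k = (\<Union>m\<le>n. S m)"
    have "finite k" unfolding k_def using finS by auto
    moreover have "A \<subseteq> (\<Union>x\<in>k. ball x e)"
    proof
      fix y assume "y \<in> A"
      then obtain u where u: "u \<in> U" "dist u y < e/2"
        unfolding A_def using closure_approachable[of y U] e by (metis half_gt_zero)
      then obtain m where m: "u \<in> S m" unfolding U_def by blast
      show "y \<in> (\<Union>x\<in>k. ball x e)"
      proof (cases "m \<le> n")
        case True
        then have "u \<in> k" using m unfolding k_def by auto
        moreover have "dist u y < e" using u e by simp
        ultimately show ?thesis by (auto simp: dist_commute)
      next
        case False
        then obtain z where z: "z \<in> S n" "dist u z \<le> c^n / (1 - c) * D"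
          using far2[OF m, of n] by force
        have "z \<in> k" using z unfolding k_def by auto
        moreover have "dist z y < e"
        proof -
          have "dist z y \<le> dist z u + dist u y" by (rule dist_triangle)
          moreover have "dist z u = dist u z" by (rule dist_commute)
          ultimately show ?thesis using z(2) u(2) cn by linarith
        qed
        ultimately show ?thesis by auto
      qed
    qed
    ultimately show ?thesis by blast
  qed
  have Acomp: "compact A"
    unfolding compact_eq_totally_bounded using tb complete_eq_closed[of A]
    by (simp add: A_def)
  have GS: "\<phi> i ` S n \<subseteq> S (Suc n)" if "i \<in> {1..N}" for i n
    unfolding SS G_def using that by auto
  have Ainv: "closure (\<Union>i\<in>{1..N}. \<phi> i ` A) = A"
  proof
    show "closure (\<Union>i\<in>{1..N}. \<phi> i ` A) \<subseteq> A"
    proof (rule closure_minimal)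
      show "closed A" unfolding A_def by simp
      show "(\<Union>i\<in>{1..N}. \<phi> i ` A) \<subseteq> A"
      proof (rule UN_least)
        fix i assume i: "i \<in> {1..N}"
        show "\<phi> i ` A \<subseteq> A" unfolding A_def
        proof (rule image_closure_subset)
          show "continuous_on (closure U) (\<phi> i)" using cont[OF i] continuous_on_subset by blast
          show "closed (closure U)" by simp
          have "\<phi> i ` U \<subseteq> U"
          proof
            fix y assume "y \<in> \<phi> i ` U"
            then obtain u n where "u \<in> S n" "y = \<phi> i u" unfolding U_def by blast
            then have "y \<in> S (Suc n)" using GS[OF i, of n] by blast
            then show "y \<in> U" unfolding U_def by blast
          qed
          then show "\<phi> i ` U \<subseteq> closure U" using closure_subset by (rule order_trans)
        qed
      qed
    qed
  next
    have "U \<subseteq> (\<Union>i\<in>{1..N}. \<phi> i ` A)"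
    proof
      fix y assume "y \<in> U"
      then obtain n where y: "y \<in> S n" unfolding U_def by blast
      have sA: "S m \<subseteq> A" for m
      proof -
        have "S m \<subseteq> U" unfolding U_def by auto
        also have "U \<subseteq> A" unfolding A_def by (rule closure_subset)
        finally show ?thesis .
      qed
      show "y \<in> (\<Union>i\<in>{1..N}. \<phi> i ` A)"
      proof (cases n)
        case 0
        then have "y = \<phi> 1 x0" using y x0 S0 by simp
        moreover have "x0 \<in> A" using sA[of 0] x0S[of 0] by blast
        ultimately show ?thesis using i1 by blast
      next
        case (Suc m)
        then have "y \<in> S (Suc m)" using y by simp
        then obtain i u where "i \<in> {1..N}" "u \<in> S m" "y = \<phi> i u" unfolding SS G_def by blast
        then show ?thesis using sA[of m] by blast
      qed
    qed
    then show "A \<subseteq> closure (\<Union>i\<in>{1..N}. \<phi> i ` A)" unfolding A_def by (rule closure_mono)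
  qed
  have uniq: "B = A" if B: "B \<noteq> {}" "compact B" "closure (\<Union>i\<in>{1..N}. \<phi> i ` B) = B" for B
  proof
    have cB: "closed B" using B(2) by (rule compact_imp_closed)
    have phiB: "\<phi> i ` B \<subseteq> B" if "i \<in> {1..N}" for i
    proof -
      have "\<phi> i ` B \<subseteq> (\<Union>i\<in>{1..N}. \<phi> i ` B)" using that by blast
      also have "\<dots> \<subseteq> closure (\<Union>i\<in>{1..N}. \<phi> i ` B)" by (rule closure_subset)
      also have "\<dots> = B" by (rule B(3))
      finally show ?thesis .
    qed
    have idB: "infdist (\<phi> i y) B \<le> c * infdist y B" if i: "i \<in> {1..N}" for i y
    proof -
      have "infdist (\<phi> i y) B \<le> infdist (\<phi> i y) (\<phi> i ` B)"
        using phiB[OF i] B(1) by (intro infdist_mono) auto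
      also have "\<dots> \<le> c * infdist y B" by (rule infdist_contr[OF B(1) L[OF i] c(1)])
      finally show ?thesis .
    qed
    have "infdist x0 B \<le> c * infdist x0 B" using idB[OF i1, of x0] x0 by simp
    then have "infdist x0 B = 0" using c infdist_nonneg[of x0 B] cancel_lemma by blast
    then have "x0 \<in> B" using in_closed_iff_infdist_zero[OF cB B(1)] by simp
    have "S n \<subseteq> B" for n
    proof (induction n)
      case 0 then show ?case using \<open>x0 \<in> B\<close> S0 by simp
    next
      case (Suc n) then show ?case unfolding SS G_def using phiB by blast
    qed
    then have "U \<subseteq> B" unfolding U_def by blast
    then show "A \<subseteq> B" unfolding A_def using cB by (rule closure_minimal)
  next
    have cA: "closed A" unfolding A_def by simp
    have phiA: "\<phi> i ` A \<subseteq> A" if "i \<in> {1..N}" for i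
    proof -
      have "\<phi> i ` A \<subseteq> (\<Union>i\<in>{1..N}. \<phi> i ` A)" using that by blast
      also have "\<dots> \<subseteq> closure (\<Union>i\<in>{1..N}. \<phi> i ` A)" by (rule closure_subset)
      also have "\<dots> = A" by (rule Ainv)
      finally show ?thesis .
    qed
    have contI: "continuous_on B (\<lambda>x. infdist x A)"
      by (intro continuous_on_infdist continuous_on_id)
    obtain b1 where b1: "b1 \<in> B" "\<forall>b\<in>B. infdist b A \<le> infdist b1 A"
      using continuous_attains_sup[OF B(2) B(1) contI] by blast
    define r where "r = infdist b1 A"
    have "(\<Union>i\<in>{1..N}. \<phi> i ` B) \<subseteq> {y. infdist y A \<le> c * r}"
    proof
      fix y assume "y \<in> (\<Union>i\<in>{1..N}. \<phi> i ` B)"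
      then obtain i b where i: "i \<in> {1..N}" and b: "b \<in> B" and y: "y = \<phi> i b" by blast
      have "infdist y A \<le> infdist (\<phi> i b) (\<phi> i ` A)"
        unfolding y by (rule infdist_mono) (use phiA[OF i] Ane in auto)
      also have "\<dots> \<le> c * infdist b A" by (rule infdist_contr[OF Ane L[OF i] c(1)])
      also have "\<dots> \<le> c * r" using b1 b c unfolding r_def by (intro mult_left_mono) auto
      finally show "y \<in> {y. infdist y A \<le> c * r}" by simp
    qed
    moreover have "closed {y. infdist y A \<le> c * r}"
      by (intro closed_Collect_le continuous_on_infdist continuous_on_id continuous_on_const)
    ultimately have "closure (\<Union>i\<in>{1..N}. \<phi> i ` B) \<subseteq> {y. infdist y A \<le> c * r}"
      by (rule closure_minimal)
    then have "B \<subseteq> {y. infdist y A \<le> c * r}" using B(3) by simp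
    then have "r \<le> c * r" using b1(1) unfolding r_def by blast
    then have r0: "r = 0" using c infdist_nonneg[of b1 A] cancel_lemma unfolding r_def by blast
    show "B \<subseteq> A"
    proof
      fix b assume "b \<in> B"
      then have "infdist b A = 0" using b1 r0 infdist_nonneg[of b A] unfolding r_def by force
      then show "b \<in> A" using in_closed_iff_infdist_zero[OF cA Ane] by simp
    qed
  qed
  show ?thesis
  proof (rule ex1I[of _ A])
    show "A \<noteq> {} \<and> compact A \<and> closure (\<Union>i\<in>{1..N}. \<phi> i ` A) = A" using Ane Acomp Ainv by simp
  next
    fix B assume "B \<noteq> {} \<and> compact B \<and> closure (\<Union>i\<in>{1..N}. \<phi> i ` B) = B"
    then show "B = A" using uniq by simp
  qed
qed



lemma contrF:
  fixes f :: "nat \<Rightarrow> real \<Rightarrow> 'a::metric_space \<Rightarrow> 'a"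
  assumes "H2 f N" "N \<ge> 1" "t \<in> {0..<1}"
  shows "\<exists>c. 0 < c \<and> c < 1 \<and> (\<forall>i\<in>{1..N}. \<forall>x y. dist (f i t x) (f i t y) \<le> c * dist x y)"
proof -
  define L where "L = LipF f N t"
  have L1: "L < 1" using assms unfolding H2_def L_def by auto
  define c where "c = max (1/2) (real_of_ereal L)"
  have rL: "real_of_ereal L < 1" using L1 by (cases L) (auto simp: one_ereal_def)
  have c: "0 < c" "c < 1"
    using rL unfolding c_def by auto
  have Lc: "L \<le> ereal c" using L1 unfolding c_def by (cases L) auto
  have "\<forall>i\<in>{1..N}. \<forall>x y. dist (f i t x) (f i t y) \<le> c * dist x y"
  proof (intro ballI allI)
    fix i x y assume i: "i \<in> {1..N}"
    have "Lip (f i t) \<le> L" unfolding L_def LipF_def by (rule Max_ge) (use i in auto)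
    then have "Lip (f i t) \<le> ereal c" using Lc by (rule order_trans)
    then show "dist (f i t x) (f i t y) \<le> c * dist x y" using c by (intro Lip_contr) auto
  qed
  then show ?thesis using c by blast
qed

lemma attr_prop:
  fixes f :: "nat \<Rightarrow> real \<Rightarrow> 'a::complete_space \<Rightarrow> 'a"
  assumes "H2 f N" "N \<ge> 1" "t \<in> {0..<1}"
    and cont: "\<forall>i\<in>{1..N}. \<forall>t\<in>{0..1}. continuous_on UNIV (f i t)"
  shows "attractor f N t \<noteq> {} \<and> compact (attractor f N t) \<and> hutch f N t (attractor f N t) = attractor f N t"
proof -
  obtain c where c: "0 < c" "c < 1" "\<forall>i\<in>{1..N}. \<forall>x y. dist (f i t x) (f i t y) \<le> c * dist x y"
    using contrF[OF assms(1-3)] by blast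
  have "\<exists>!A. A \<noteq> {} \<and> compact A \<and> closure (\<Union>i\<in>{1..N}. f i t ` A) = A"
    by (rule hutch_exists[of N c "\<lambda>i. f i t"]) (use assms c in auto)
  then have "(THE A. A \<noteq> {} \<and> compact A \<and> hutch f N t A = A) \<noteq> {} \<and>
     compact (THE A. A \<noteq> {} \<and> compact A \<and> hutch f N t A = A) \<and>
     hutch f N t (THE A. A \<noteq> {} \<and> compact A \<and> hutch f N t A = A) = (THE A. A \<noteq> {} \<and> compact A \<and> hutch f N t A = A)"
    unfolding hutch_def by (rule theI')
  then show ?thesis unfolding attractor_def .
qed

lemma bdd_infdist:
  fixes K :: "'a::metric_space set"
  assumes "compact K" shows "bdd_above ((\<lambda>b. infdist b X) ` K)"
  by (intro bounded_imp_bdd_above compact_imp_bounded compact_continuous_image assms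
      continuous_on_infdist continuous_on_id)

lemma hd1: "compact A \<Longrightarrow> a \<in> A \<Longrightarrow> infdist a B \<le> hausdist B A"
  unfolding hausdist_def by (rule order_trans[OF cSUP_upper[OF _ bdd_infdist]]) auto

lemma hd2: "compact B \<Longrightarrow> a \<in> B \<Longrightarrow> infdist a A \<le> hausdist B A"
  unfolding hausdist_def by (rule order_trans[OF cSUP_upper[OF _ bdd_infdist]]) auto

theorem mainTheorem9:
  fixes f :: "nat \<Rightarrow> real \<Rightarrow> 'a::complete_space \<Rightarrow> 'a"
    and N :: nat and istar :: nat
  assumes "N \<ge> 2"
    and "\<forall>i\<in>{1..N}. \<forall>t\<in>{0..1}. continuous_on UNIV (f i t)"
    and "H1 f N"
    and "H2 f N"
    and "istar \<in> {1..N}"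
    and "isometry (f istar 1)"
  shows "(\<forall>A. upper_TA f N A \<longrightarrow> f istar 1 ` A = A) \<and>
         (H3 f N \<longrightarrow> (\<forall>A. lower_TA f N A \<and> compact A \<longrightarrow> f istar 1 ` A = A))"
proof (intro conjI allI impI)
  define g where "g = f istar 1"
  have N1: "N \<ge> 1" using assms(1) by simp
  fix A assume uA: "upper_TA f N A"
  then obtain tn where cA: "compact A" and tn: "\<forall>n. 0 \<le> tn n \<and> tn n < 1" "tn \<longlonglongrightarrow> 1"
      and hlim: "(\<lambda>n. hausdist (attractor f N (tn n)) A) \<longlonglongrightarrow> 0"
    unfolding upper_TA_def by blast
  define At where "At n = attractor f N (tn n)" for n
  define h where "h n = hausdist (At n) A" for n
  have tn01: "tn n \<in> {0..<1}" for n using tn by auto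
  have At: "At n \<noteq> {}" "compact (At n)" "hutch f N (tn n) (At n) = At n" for n
    using attr_prop[OF assms(4) N1 tn01[of n] assms(2)] unfolding At_def by auto
  have Atinv: "f istar (tn n) ` At n \<subseteq> At n" for n
  proof -
    have "f istar (tn n) ` At n \<subseteq> (\<Union>i\<in>{1..N}. f i (tn n) ` At n)" using assms(5) by blast
    also have "\<dots> \<subseteq> closure (\<Union>i\<in>{1..N}. f i (tn n) ` At n)" by (rule closure_subset)
    also have "\<dots> = At n" using At(3)[of n] by (simp add: hutch_def)
    finally show ?thesis .
  qed
  have nonexp: "dist (f istar (tn n) x) (f istar (tn n) y) \<le> dist x y" for n x y
  proof -
    obtain c where c: "0 < c" "c < 1" "\<forall>i\<in>{1..N}. \<forall>x y. dist (f i (tn n) x) (f i (tn n) y) \<le> c * dist x y"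
      using contrF[OF assms(4) N1 tn01[of n]] by blast
    have "dist (f istar (tn n) x) (f istar (tn n) y) \<le> c * dist x y" using c(3) assms(5) by blast
    also have "\<dots> \<le> 1 * dist x y" using c by (intro mult_right_mono) auto
    finally show ?thesis by simp
  qed
  show "f istar 1 ` A = A"
  proof (cases "A = {}")
    case True then show ?thesis by simp
  next
    case Ane: False
    have "g ` A \<subseteq> A"
    proof
      fix b assume "b \<in> g ` A"
      then obtain a where a: "a \<in> A" and b: "b = g a" by blast
      have "\<exists>y. y \<in> At n \<and> dist a y \<le> h n" for n
      proof -
        obtain y where y: "y \<in> At n" "\<forall>y'\<in>At n. dist a y \<le> dist a y'"
        proof -
          have "continuous_on (At n) (\<lambda>y. dist a y)" by (intro continuous_intros)
          from continuous_attains_inf[OF At(2)[of n] At(1)[of n] this] show ?thesis using that by blast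
        qed
        have "dist a y \<le> infdist a (At n)"
          unfolding infdist_notempty[OF At(1)[of n]] by (rule cINF_greatest) (use At(1) y in auto)
        also have "\<dots> \<le> h n" unfolding h_def by (rule hd1[OF cA a])
        finally show ?thesis using y by blast
      qed
      then obtain y where y: "\<And>n. y n \<in> At n" "\<And>n. dist a (y n) \<le> h n" by metis
      define e where "e n = dist (g a) (f istar (tn n) a)" for n
      have elim: "e \<longlonglongrightarrow> 0"
      proof -
        have "continuous_on {0..1} (\<lambda>t. f istar t a)" using assms(3,5) unfolding H1_def by blast
        then have "(\<lambda>n. f istar (tn n) a) \<longlonglongrightarrow> f istar 1 a"
          by (rule continuous_on_tendsto_compose[OF _ tn(2)]) (use tn(1) in \<open>auto intro!: always_eventually less_imp_le\<close>)
        from tendsto_dist[OF tendsto_const this, of "g a"] show ?thesis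
          unfolding e_def g_def by simp
      qed
      have bound: "infdist (g a) A \<le> 2 * h n + e n" for n
      proof -
        define z where "z = f istar (tn n) (y n)"
        have zA: "z \<in> At n" using Atinv y(1) unfolding z_def by blast
        have "infdist (g a) A \<le> infdist z A + dist (g a) z" by (rule infdist_triangle)
        also have "infdist z A \<le> h n" unfolding h_def by (rule hd2[OF At(2) zA])
        also have "dist (g a) z \<le> e n + dist a (y n)"
        proof -
          have "dist (g a) z \<le> dist (g a) (f istar (tn n) a) + dist (f istar (tn n) a) z"
            by (rule dist_triangle)
          moreover have "dist (f istar (tn n) a) z \<le> dist a (y n)" unfolding z_def by (rule nonexp)
          ultimately show ?thesis unfolding e_def by simp
        qed
        finally show ?thesis using y(2)[of n] by simp
      qed
      have "(\<lambda>n. 2 * h n + e n) \<longlonglongrightarrow> 0"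
        using tendsto_add[OF tendsto_mult[OF tendsto_const hlim] elim, of 2]
        unfolding h_def At_def by simp
      then have "infdist (g a) A \<le> 0"
        by (rule LIMSEQ_le_const) (use bound in auto)
      then have "infdist (g a) A = 0" using infdist_nonneg[of "g a" A] by simp
      then show "b \<in> A" using in_closed_iff_infdist_zero[OF compact_imp_closed[OF cA] Ane] b by simp
    qed
    then show ?thesis using isometry_compact_surj[OF _ cA] assms(6) unfolding g_def by blast
  qed
next
  fix A assume "H3 f N" and lA: "lower_TA f N A \<and> compact A"
  then have "hutch f N 1 A = A" "compact A" unfolding lower_TA_def by auto
  have "f istar 1 ` A \<subseteq> (\<Union>i\<in>{1..N}. f i 1 ` A)" using assms(5) by blast
  also have "\<dots> \<subseteq> closure (\<Union>i\<in>{1..N}. f i 1 ` A)" by (rule closure_subset)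
  also have "\<dots> = A" using \<open>hutch f N 1 A = A\<close> by (simp add: hutch_def)
  finally have "f istar 1 ` A \<subseteq> A" .
  then show "f istar 1 ` A = A" using isometry_compact_surj[OF assms(6) \<open>compact A\<close>] by blast
qed

end
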